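(* Suppose $\mathbf{X}=\mathbf{D}_1\boldsymbol{\Gamma}_1$, $\boldsymbol{\Gamma}_{i-1}=\mathbf{D}_i\boldsymbol{\Gamma}_i$ for $2\le i\le K$, all $\boldsymbol{\Gamma}_i\ne0$, and $\mathbf{Y}=\mathbf{X}+\mathbf{E}$ with $\|\mathbf{E}\|_{2,\infty}^{p}\le\epsilon_0$. Let $|\Gamma_i^{\min}|,|\Gamma_i^{\max}|$ be the smallest and largest absolute values of the nonzero entries of $\boldsymbol{\Gamma}_i$. Let $\hat{\boldsymbol{\Gamma}}_0=\mathbf{Y}$ and $\hat{\boldsymbol{\Gamma}}_i=\mathcal{H}_{\beta_i}(\mathbf{D}_i^T\hat{\boldsymbol{\Gamma}}_{i-1})$ for $1\le i\le K$ (layered hard thresholding). Define recursively $$\epsilon_i=\sqrt{\|\boldsymbol{\Gamma}_i\|_{0,\infty}^{p}}\,\big(\epsilon_{i-1}+\mu(\mathbf{D}_i)(\|\boldsymbol{\Gamma}_i\|_{0,\infty}^{s}-1)|\Gamma_i^{\max}|\big).$$ Assume that for all $1\le i\le K$: (a) $\|\boldsymbol{\Gamma}_i\|_{0,\infty}^{s}<\tfrac12\Big(1+\tfrac{1}{\mu(\mathbf{D}_i)}\tfrac{|\Gamma_i^{\min}|}{|\Gamma_i^{\max}|}\Big)-\tfrac{1}{\mu(\mathbf{D}_i)}\tfrac{\epsilon_{i-1}}{|\Gamma_i^{\max}|}$; and (b) $|\Gamma_i^{\min}|-(\|\boldsymbol{\Gamma}_i\|_{0,\infty}^{s}-1)\mu(\mathbf{D}_i)|\Gamma_i^{\max}|-\epsilon_{i-1}>\beta_i>\|\boldsymbol{\Gamma}_i\|_{0,\infty}^{s}\mu(\mathbf{D}_i)|\Gamma_i^{\max}|+\epsilon_{i-1}$.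 Then for all $1\le i\le K$: (1) the support of $\hat{\boldsymbol{\Gamma}}_i$ equals that of $\boldsymbol{\Gamma}_i$; and (2) $\|\boldsymbol{\Gamma}_i-\hat{\boldsymbol{\Gamma}}_i\|_{2,\infty}^{p}\le\epsilon_i$.
   Context: Setting. Signals are one-dimensional of length $N$ with periodic boundary conditions; $m_0=1$, $\boldsymbol{\Gamma}_0=\mathbf{X}$. For $i\ge1$, $\boldsymbol{\Gamma}_i\in\mathbb{R}^{Nm_i}$ has entry $km_i+r$ equal to the coefficient of filter $r$ at spatial shift $k$. $\mathbf{D}_i\in\mathbb{R}^{Nm_{i-1}\times Nm_i}$ is a (stride) convolutional dictionary whose column $km_i+r$ is local filter $r$ (length $n_{i-1}m_{i-1}$) placed cyclically on entries $km_{i-1},\dots,km_{i-1}+n_{i-1}m_{i-1}-1$, zero elsewhere. Columns have unit $\ell_2$ norm; $\mu(\mathbf{D})=\max_{i\neq j}|\mathbf{d}_i^T\mathbf{d}_j|$. Stripes: $\mathbf{S}_{i,j}\boldsymbol{\Gamma}_i$ is the subvector of $\boldsymbol{\Gamma}_i$ at spatial shifts $k\in\{j-n_{i-1}+1,\dots,j+n_{i-1}-1\}$ (mod $N$), all channels; $\|\boldsymbol{\Gamma}_i\|_{0,\infty}^{s}=\max_j\|\mathbf{S}_{i,j}\boldsymbol{\Gamma}_i\|_0$. Patches: for $i\ge0$, $\mathbf{P}_{i,j}\mathbf{V}$ extracts from $\mathbf{V}\in\mathbb{R}^{Nm_i}$ the cyclically contiguous subvector at spatial shifts $j,\dots,j+n_i-1$,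 all channels (length $n_im_i$); $\|\mathbf{V}\|_{2,\infty}^{p}=\max_j\|\mathbf{P}_{i,j}\mathbf{V}\|_2$, $\|\mathbf{V}\|_{0,\infty}^{p}=\max_j\|\mathbf{P}_{i,j}\mathbf{V}\|_0$. For the last layer $\boldsymbol{\Gamma}_K$, the patch size $n_K$ is an arbitrary fixed choice. Hard thresholding: $\mathcal{H}_\beta$ acts entrywise, $\mathcal{H}_\beta(z)=z$ if $|z|>\beta$ and $0$ otherwise. *)

theory Defs
  imports Complex_Main
begin

text \<open>Vectors of R^(N*m) are functions nat => real; only indices below N*m matter.
  Index k*m + r: spatial shift k < N, channel r < m.\<close>

definition patch_idx :: "nat \<Rightarrow> nat \<Rightarrow> nat \<Rightarrow> nat \<Rightarrow> nat set" where
  "patch_idx N mm nn j = {k * mm + r | k r. r < mm \<and> (\<exists>t<nn. k = (j + t) mod N)}"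

definition stripe_idx :: "nat \<Rightarrow> nat \<Rightarrow> nat \<Rightarrow> nat \<Rightarrow> nat set" where
  "stripe_idx N mm nprev j = {k * mm + r | k r. r < mm \<and>
      (\<exists>t::int. \<bar>t\<bar> < int nprev \<and> int k = (int j + t) mod int N)}"

definition patch_norm2 :: "nat \<Rightarrow> nat \<Rightarrow> nat \<Rightarrow> (nat \<Rightarrow> real) \<Rightarrow> real" where
  "patch_norm2 N mm nn V = Max ((\<lambda>j. sqrt (\<Sum>c\<in>patch_idx N mm nn j. (V c)\<^sup>2)) ` {..<N})"

definition patch_norm0 :: "nat \<Rightarrow> nat \<Rightarrow> nat \<Rightarrow> (nat \<Rightarrow> real) \<Rightarrow> nat" where
  "patch_norm0 N mm nn V = Max ((\<lambda>j. card {c\<in>patch_idx N mm nn j. V c \<noteq> 0}) ` {..<N})"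

definition stripe_norm0 :: "nat \<Rightarrow> nat \<Rightarrow> nat \<Rightarrow> (nat \<Rightarrow> real) \<Rightarrow> nat" where
  "stripe_norm0 N mm nprev V = Max ((\<lambda>j. card {c\<in>stripe_idx N mm nprev j. V c \<noteq> 0}) ` {..<N})"

text \<open>Stride convolutional dictionary (N*mprev rows, N*mcur columns): column k*mcur+r is
  filter r (F r : coefficients 0..nprev*mprev-1) placed cyclically starting at row k*mprev.\<close>
definition conv_dict :: "nat \<Rightarrow> nat \<Rightarrow> nat \<Rightarrow> nat \<Rightarrow> (nat \<Rightarrow> nat \<Rightarrow> real) \<Rightarrow> nat \<Rightarrow> nat \<Rightarrow> real" where
  "conv_dict N mprev nprev mcur F a c =
     (let off = nat ((int a - int ((c div mcur) * mprev)) mod int (N * mprev))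
      in if off < nprev * mprev then F (c mod mcur) off else 0)"

definition mat_vec :: "nat \<Rightarrow> (nat \<Rightarrow> nat \<Rightarrow> real) \<Rightarrow> (nat \<Rightarrow> real) \<Rightarrow> nat \<Rightarrow> real" where
  "mat_vec ncols A v = (\<lambda>a. \<Sum>c<ncols. A a c * v c)"

definition tr_mat_vec :: "nat \<Rightarrow> (nat \<Rightarrow> nat \<Rightarrow> real) \<Rightarrow> (nat \<Rightarrow> real) \<Rightarrow> nat \<Rightarrow> real" where
  "tr_mat_vec nrows A v = (\<lambda>c. \<Sum>a<nrows. A a c * v a)"

text \<open>Mutual coherence; the 0 only matters when there is a single column.\<close>
definition coherence :: "nat \<Rightarrow> nat \<Rightarrow> (nat \<Rightarrow> nat \<Rightarrow> real) \<Rightarrow> real" where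
  "coherence nrows ncols A = Max (insert 0
     {\<bar>\<Sum>a<nrows. A a c * A a c'\<bar> | c c'. c < ncols \<and> c' < ncols \<and> c \<noteq> c'})"

definition supp :: "nat \<Rightarrow> (nat \<Rightarrow> real) \<Rightarrow> nat set" where
  "supp dd V = {c. c < dd \<and> V c \<noteq> 0}"

definition gmin :: "nat \<Rightarrow> (nat \<Rightarrow> real) \<Rightarrow> real" where
  "gmin dd V = Min ((\<lambda>c. \<bar>V c\<bar>) ` supp dd V)"

definition gmax :: "nat \<Rightarrow> (nat \<Rightarrow> real) \<Rightarrow> real" where
  "gmax dd V = Max ((\<lambda>c. \<bar>V c\<bar>) ` supp dd V)"

definition hard_thr :: "real \<Rightarrow> (nat \<Rightarrow> real) \<Rightarrow> nat \<Rightarrow> real" where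
  "hard_thr \<beta> v = (\<lambda>c. if \<bar>v c\<bar> > \<beta> then v c else 0)"

definition dict :: "nat \<Rightarrow> (nat \<Rightarrow> nat) \<Rightarrow> (nat \<Rightarrow> nat) \<Rightarrow> (nat \<Rightarrow> nat \<Rightarrow> nat \<Rightarrow> real)
    \<Rightarrow> nat \<Rightarrow> nat \<Rightarrow> nat \<Rightarrow> real" where
  "dict N m n F i = conv_dict N (m (i - 1)) (n (i - 1)) (m i) (F i)"

definition mu_layer :: "nat \<Rightarrow> (nat \<Rightarrow> nat) \<Rightarrow> (nat \<Rightarrow> nat) \<Rightarrow> (nat \<Rightarrow> nat \<Rightarrow> nat \<Rightarrow> real)
    \<Rightarrow> nat \<Rightarrow> real" where
  "mu_layer N m n F i = coherence (N * m (i - 1)) (N * m i) (dict N m n F i)"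

primrec ghat :: "nat \<Rightarrow> (nat \<Rightarrow> nat) \<Rightarrow> (nat \<Rightarrow> nat) \<Rightarrow> (nat \<Rightarrow> nat \<Rightarrow> nat \<Rightarrow> real)
    \<Rightarrow> (nat \<Rightarrow> real) \<Rightarrow> (nat \<Rightarrow> real) \<Rightarrow> nat \<Rightarrow> nat \<Rightarrow> real" where
  "ghat N m n F \<beta> Y 0 = Y"
| "ghat N m n F \<beta> Y (Suc i) =
     hard_thr (\<beta> (Suc i)) (tr_mat_vec (N * m i) (dict N m n F (Suc i)) (ghat N m n F \<beta> Y i))"

primrec eps_seq :: "nat \<Rightarrow> (nat \<Rightarrow> nat) \<Rightarrow> (nat \<Rightarrow> nat) \<Rightarrow> (nat \<Rightarrow> nat \<Rightarrow> nat \<Rightarrow> real)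
    \<Rightarrow> (nat \<Rightarrow> nat \<Rightarrow> real) \<Rightarrow> real \<Rightarrow> nat \<Rightarrow> real" where
  "eps_seq N m n F \<Gamma> \<epsilon>0 0 = \<epsilon>0"
| "eps_seq N m n F \<Gamma> \<epsilon>0 (Suc i) =
     sqrt (real (patch_norm0 N (m (Suc i)) (n (Suc i)) (\<Gamma> (Suc i)))) *
     (eps_seq N m n F \<Gamma> \<epsilon>0 i + mu_layer N m n F (Suc i) *
        (real (stripe_norm0 N (m (Suc i)) (n i) (\<Gamma> (Suc i))) - 1) * gmax (N * m (Suc i)) (\<Gamma> (Suc i)))"

end

theory Submission
  imports Defs "HOL-Analysis.L2_Norm"
begin

lemma patch_idx_sub: assumes N: "N > 0" shows "patch_idx N M nn j \<subseteq> {..<N*M}"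
proof
  fix x assume "x \<in> patch_idx N M nn j"
  then obtain k r t where x: "x = k*M + r" "r < M" "t < nn" "k = (j+t) mod N" unfolding patch_idx_def by blast
  have "k < N" using x N by simp
  hence "k + 1 \<le> N" by simp
  hence "(k+1)*M \<le> N*M" by (metis mult_le_mono1)
  thus "x \<in> {..<N*M}" using x by (simp add: algebra_simps)
qed

lemma stripe_idx_sub: assumes N: "N > 0" shows "stripe_idx N M nn j \<subseteq> {..<N*M}"
proof
  fix x assume "x \<in> stripe_idx N M nn j"
  then obtain k r t where x: "x = k*M + r" "r < M" "int k = (int j + t) mod int N" unfolding stripe_idx_def by blast
  hence "int k < int N" using N by simp
  hence "k + 1 \<le> N" by simp
  hence "(k+1)*M \<le> N*M" by (metis mult_le_mono1)
  thus "x \<in> {..<N*M}" using x by (simp add: algebra_simps)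
qed

lemma patch_memI:
  assumes M: "M > 0" and N: "N > 0" and a: "a < N*M" and k: "k < N"
    and lt: "(int a - int (k*M)) mod int (N*M) < int (nn*M)"
  shows "a \<in> patch_idx N M nn k"
proof -
  define x where "x = int a - int (k*M)"
  define q where "q = x div int (N*M)"
  define r0 where "r0 = x mod int (N*M)"
  have xq: "x = int (N*M) * q + r0" unfolding q_def r0_def by simp
  have r0nn: "r0 \<ge> 0" unfolding r0_def using M N by simp
  have r0lt: "r0 < int (nn*M)" using lt unfolding r0_def x_def .
  define s where "s = a div M"
  define \<rho> where "\<rho> = a mod M"
  have as: "a = s*M + \<rho>" unfolding s_def \<rho>_def by simp
  have \<rho>lt: "\<rho> < M" unfolding \<rho>_def using M by simp
  have sN: "s < N" unfolding s_def using a M by (simp add: less_mult_imp_div_less)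
  define t where "t = int s - int k - int N * q"
  have r0t: "r0 = t * int M + int \<rho>"
    using xq unfolding t_def x_def by (simp add: as algebra_simps)
  have tm: "t * int M > (-1) * int M" using r0t r0nn \<rho>lt by simp
  have t0: "t > -1"
  proof (rule ccontr)
    assume "\<not> t > -1" hence "t \<le> -1" by simp
    hence "t * int M \<le> (-1) * int M" using M by (intro mult_right_mono) auto
    thus False using tm by simp
  qed
  have "t * int M < int nn * int M" using r0t r0lt by simp
  hence tn: "t < int nn" using M by (simp add: mult_less_cancel_right)
  have "int s = int k + t + int N * q" unfolding t_def by simp
  hence "int s mod int N = (int k + t) mod int N" by (metis mod_mult_self2 add.commute mult.commute)
  hence "int s = (int k + t) mod int N" using sN by simp
  also have "\<dots> = int ((k + nat t) mod N)" using t0 by (simp add: zmod_int)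
  finally have sk: "s = (k + nat t) mod N" by simp
  show ?thesis unfolding patch_idx_def
    using as \<rho>lt sk tn t0 by (intro CollectI exI[of _ s] exI[of _ \<rho>]) (auto intro!: exI[of _ "nat t"])
qed

lemma conv_loc:
  assumes N: "N > 0" and a: "a < N*M" and c: "c < N*mc"
    and nz: "conv_dict N M nprev mc F a c \<noteq> 0"
  shows "a \<in> patch_idx N M nprev (c div mc)"
proof -
  have M: "M > 0" using a by (metis mult_0_right gr0I less_nat_zero_code)
  have mc: "mc > 0" using c by (metis mult_0_right gr0I less_nat_zero_code)
  have k: "c div mc < N" using c mc by (simp add: less_mult_imp_div_less)
  have "nat ((int a - int ((c div mc) * M)) mod int (N * M)) < nprev * M"
    using nz unfolding conv_dict_def Let_def by (auto split: if_splits)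
  hence "(int a - int ((c div mc) * M)) mod int (N * M) < int (nprev * M)"
    using M N by linarith
  thus ?thesis using patch_memI[OF M N a k] by blast
qed

lemma two_patch_stripe:
  assumes M: "M > 0" and a1: "a \<in> patch_idx N M nn k" and a2: "a \<in> patch_idx N M nn k'"
    and k': "k' < N" and mc: "r' < mc"
  shows "k' * mc + r' \<in> stripe_idx N mc nn k"
proof -
  obtain k1 r1 t1 where h1: "a = k1*M + r1" "r1 < M" "t1 < nn" "k1 = (k+t1) mod N"
    using a1 unfolding patch_idx_def by blast
  obtain k2 r2 t2 where h2: "a = k2*M + r2" "r2 < M" "t2 < nn" "k2 = (k'+t2) mod N"
    using a2 unfolding patch_idx_def by blast
  have "k1 = a div M" using h1 M by simp
  moreover have "k2 = a div M" using h2 M by simp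
  ultimately have eq: "(k+t1) mod N = (k'+t2) mod N" using h1 h2 by simp
  hence eqi: "(int k + int t1) mod int N = (int k' + int t2) mod int N"
    by (metis of_nat_add zmod_int)
  define t where "t = int t1 - int t2"
  have "(int k + t) mod int N = ((int k + int t1) - int t2) mod int N" unfolding t_def by (simp add: algebra_simps)
  also have "\<dots> = ((int k + int t1) mod int N - int t2) mod int N" by (simp add: mod_diff_left_eq)
  also have "\<dots> = ((int k' + int t2) mod int N - int t2) mod int N" using eqi by simp
  also have "\<dots> = int k' mod int N" by (simp add: mod_diff_left_eq)
  also have "\<dots> = int k'" using k' by simp
  finally have "int k' = (int k + t) mod int N" by simp
  moreover have "\<bar>t\<bar> < int nn" unfolding t_def using h1 h2 by auto
  ultimately show ?thesis unfolding stripe_idx_def using mc by blast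
qed

lemma layer:
  fixes N M mc nprev nn :: nat and D :: "nat \<Rightarrow> nat \<Rightarrow> real" and \<Gamma> G V :: "nat \<Rightarrow> real"
    and \<epsilon> \<beta> :: real
  assumes N: "N > 0"
    and loc: "\<And>a c. a < N*M \<Longrightarrow> c < N*mc \<Longrightarrow> D a c \<noteq> 0 \<Longrightarrow> a \<in> patch_idx N M nprev (c div mc)"
    and unit: "\<forall>c<N*mc. (\<Sum>a<N*M. (D a c)\<^sup>2) = 1"
    and model: "\<forall>a<N*M. G a = mat_vec (N*mc) D \<Gamma> a"
    and nz: "\<exists>c<N*mc. \<Gamma> c \<noteq> 0"
    and err: "patch_norm2 N M nprev (\<lambda>a. V a - G a) \<le> \<epsilon>"
    and cb1: "gmin (N*mc) \<Gamma> - (real (stripe_norm0 N mc nprev \<Gamma>) - 1) * coherence (N*M) (N*mc) D * gmax (N*mc) \<Gamma> - \<epsilon> > \<beta>"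
    and cb2: "\<beta> > real (stripe_norm0 N mc nprev \<Gamma>) * coherence (N*M) (N*mc) D * gmax (N*mc) \<Gamma> + \<epsilon>"
  shows "supp (N*mc) (hard_thr \<beta> (tr_mat_vec (N*M) D V)) = supp (N*mc) \<Gamma>
     \<and> patch_norm2 N mc nn (\<lambda>c. \<Gamma> c - hard_thr \<beta> (tr_mat_vec (N*M) D V) c)
        \<le> sqrt (real (patch_norm0 N mc nn \<Gamma>)) * (\<epsilon> + coherence (N*M) (N*mc) D * (real (stripe_norm0 N mc nprev \<Gamma>) - 1) * gmax (N*mc) \<Gamma>)"
proof -
  define \<mu> where "\<mu> = coherence (N*M) (N*mc) D"
  define s where "s = stripe_norm0 N mc nprev \<Gamma>"
  define gm where "gm = gmin (N*mc) \<Gamma>"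
  define gM where "gM = gmax (N*mc) \<Gamma>"
  define z where "z = tr_mat_vec (N*M) D V"
  define h where "h = hard_thr \<beta> z"
  define ip where "ip = (\<lambda>c c'. \<Sum>a<N*M. D a c * D a c')"
  define E where "E = (\<lambda>a. V a - G a)"
  define B where "B = \<epsilon> + \<mu> * (real s - 1) * gM"
  obtain c0 where c0: "c0 < N*mc" "\<Gamma> c0 \<noteq> 0" using nz by blast
  have mc: "mc > 0" using c0 by (metis mult_0_right gr0I less_nat_zero_code)
  have M: "M > 0"
  proof (rule ccontr)
    assume "\<not> M > 0" hence "M = 0" by simp
    thus False using unit c0 by simp
  qed
  have supfin: "finite (supp (N*mc) \<Gamma>)" unfolding supp_def by simp
  have gmax_ge: "\<bar>\<Gamma> c\<bar> \<le> gM" if "c < N*mc" "\<Gamma> c \<noteq> 0" for c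
    unfolding gM_def gmax_def using that supfin by (intro Max_ge) (auto simp: supp_def)
  have gmin_le: "gm \<le> \<bar>\<Gamma> c\<bar>" if "c < N*mc" "\<Gamma> c \<noteq> 0" for c
    unfolding gm_def gmin_def using that supfin by (intro Min_le) (auto simp: supp_def)
  have gM0: "gM \<ge> 0" using gmax_ge[OF c0] by simp
  have cohfin: "finite {\<bar>\<Sum>a<N*M. D a c * D a c'\<bar> | c c'. c < N*mc \<and> c' < N*mc \<and> c \<noteq> c'}"
  proof (rule finite_subset)
    show "{\<bar>\<Sum>a<N*M. D a c * D a c'\<bar> | c c'. c < N*mc \<and> c' < N*mc \<and> c \<noteq> c'}
      \<subseteq> (\<lambda>(c,c'). \<bar>\<Sum>a<N*M. D a c * D a c'\<bar>) ` ({..<N*mc} \<times> {..<N*mc})" by auto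
  qed simp
  have coh: "\<bar>ip c c'\<bar> \<le> \<mu>" if "c < N*mc" "c' < N*mc" "c \<noteq> c'" for c c'
    unfolding \<mu>_def coherence_def ip_def using that cohfin by (intro Max_ge) auto
  have \<mu>0: "\<mu> \<ge> 0" unfolding \<mu>_def coherence_def using cohfin by (intro Max_ge) auto
  have stripe_cnt: "card {c\<in>stripe_idx N mc nprev j. \<Gamma> c \<noteq> 0} \<le> s" if "j < N" for j
    unfolding s_def stripe_norm0_def using that by (intro Max_ge) auto
  have key: "\<exists>R. z c = \<Gamma> c + R \<and> \<bar>R\<bar> \<le> \<mu> * gM * (real s - (if \<Gamma> c \<noteq> 0 then 1 else 0)) + \<epsilon>"
    if c: "c < N*mc" for c
  proof -
    define k where "k = c div mc"
    have k: "k < N" unfolding k_def using c mc by (simp add: less_mult_imp_div_less)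
    define P where "P = patch_idx N M nprev k"
    have PT: "P \<subseteq> {..<N*M}" unfolding P_def by (rule patch_idx_sub[OF N])
    have zsplit: "z c = (\<Sum>a<N*M. D a c * G a) + (\<Sum>a<N*M. D a c * E a)"
      unfolding z_def tr_mat_vec_def E_def by (simp add: sum.distrib[symmetric] algebra_simps)
    have R2: "\<bar>\<Sum>a<N*M. D a c * E a\<bar> \<le> \<epsilon>"
    proof -
      have "(\<Sum>a<N*M. D a c * E a) = (\<Sum>a\<in>P. D a c * E a)"
        using PT loc[OF _ c] unfolding P_def k_def by (intro sum.mono_neutral_right) auto
      hence "\<bar>\<Sum>a<N*M. D a c * E a\<bar> \<le> (\<Sum>a\<in>P. \<bar>D a c\<bar> * \<bar>E a\<bar>)"
        by (simp add: sum_abs[THEN order_trans] abs_mult)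
      also have "\<dots> \<le> L2_set (\<lambda>a. D a c) P * L2_set E P" by (rule L2_set_mult_ineq)
      also have "\<dots> \<le> 1 * \<epsilon>"
      proof (rule mult_mono)
        have "(\<Sum>a\<in>P. (D a c)\<^sup>2) \<le> (\<Sum>a<N*M. (D a c)\<^sup>2)"
          using PT by (intro sum_mono2) auto
        thus "L2_set (\<lambda>a. D a c) P \<le> 1" unfolding L2_set_def using unit c by simp
        have "L2_set E P \<le> patch_norm2 N M nprev E"
          unfolding patch_norm2_def L2_set_def P_def using k by (intro Max_ge) auto
        thus "L2_set E P \<le> \<epsilon>" using err unfolding E_def by simp
      qed auto
      finally show ?thesis by simp
    qed
    have sig: "(\<Sum>a<N*M. D a c * G a) = (\<Sum>c'<N*mc. ip c c' * \<Gamma> c')"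
    proof -
      have "(\<Sum>a<N*M. D a c * G a) = (\<Sum>a<N*M. \<Sum>c'<N*mc. D a c * D a c' * \<Gamma> c')"
        using model unfolding mat_vec_def by (auto simp: sum_distrib_left algebra_simps intro!: sum.cong)
      also have "\<dots> = (\<Sum>c'<N*mc. \<Sum>a<N*M. D a c * D a c' * \<Gamma> c')" by (rule sum.swap)
      also have "\<dots> = (\<Sum>c'<N*mc. ip c c' * \<Gamma> c')" unfolding ip_def by (simp add: sum_distrib_right)
      finally show ?thesis .
    qed
    define A where "A = {..<N*mc} - {c}"
    have ipcc: "ip c c = 1" unfolding ip_def using unit c by (simp add: power2_eq_square)
    have sig2: "(\<Sum>c'<N*mc. ip c c' * \<Gamma> c') = \<Gamma> c + (\<Sum>c'\<in>A. ip c c' * \<Gamma> c')"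
      unfolding A_def using c ipcc by (simp add: sum.remove)
    define S where "S = {c'\<in>A. \<Gamma> c' \<noteq> 0 \<and> ip c c' \<noteq> 0}"
    have SA: "S \<subseteq> A" unfolding S_def by auto
    have finA: "finite A" unfolding A_def by simp
    have S_sub: "S \<subseteq> {c'\<in>stripe_idx N mc nprev k. \<Gamma> c' \<noteq> 0} - {c}"
    proof
      fix c' assume c'S: "c' \<in> S"
      hence c': "c' < N*mc" "c' \<noteq> c" "\<Gamma> c' \<noteq> 0" "ip c c' \<noteq> 0" unfolding S_def A_def by auto
      then obtain a where a: "a < N*M" "D a c * D a c' \<noteq> 0" unfolding ip_def
        by (meson lessThan_iff sum.not_neutral_contains_not_neutral)
      have p1: "a \<in> patch_idx N M nprev k" using loc[OF a(1) c] a(2) unfolding k_def by simp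
      have p2: "a \<in> patch_idx N M nprev (c' div mc)" using loc[OF a(1) c'(1)] a(2) by simp
      have k': "c' div mc < N" using c' mc by (simp add: less_mult_imp_div_less)
      have "c' div mc * mc + c' mod mc \<in> stripe_idx N mc nprev k"
        by (rule two_patch_stripe[OF M p1 p2 k']) (simp add: mc)
      thus "c' \<in> {c'\<in>stripe_idx N mc nprev k. \<Gamma> c' \<noteq> 0} - {c}" using c' by simp
    qed
    have c_stripe: "c \<in> stripe_idx N mc nprev k"
    proof -
      have "c = k * mc + c mod mc" unfolding k_def by simp
      moreover have "int k = (int k + 0) mod int N" using k by simp
      moreover have "\<bar>0::int\<bar> < int nprev"
      proof -
        have "(\<Sum>a<N*M. (D a c)\<^sup>2) \<noteq> 0" using unit c by simp
        then obtain a where a: "a < N*M" "(D a c)\<^sup>2 \<noteq> 0"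
          by (meson lessThan_iff sum.not_neutral_contains_not_neutral)
        hence "a \<in> patch_idx N M nprev k" using loc[OF a(1) c] unfolding k_def by simp
        then obtain t where "t < nprev" unfolding patch_idx_def by blast
        thus ?thesis by simp
      qed
      moreover have "c mod mc < mc" using mc by simp
      ultimately show ?thesis unfolding stripe_idx_def by blast
    qed
    have fin_st: "finite (stripe_idx N mc nprev k)"
      by (rule finite_subset[OF stripe_idx_sub[OF N]]) simp
    have cardS: "real (card S) \<le> real s - (if \<Gamma> c \<noteq> 0 then 1 else 0)"
    proof -
      have "card S \<le> card ({c'\<in>stripe_idx N mc nprev k. \<Gamma> c' \<noteq> 0} - {c})"
        using S_sub fin_st by (intro card_mono) auto
      also have "\<dots> = card {c'\<in>stripe_idx N mc nprev k. \<Gamma> c' \<noteq> 0} - (if \<Gamma> c \<noteq> 0 then 1 else 0)"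
        using c_stripe fin_st by (simp add: card_Diff_singleton_if)
      finally have "card S \<le> card {c'\<in>stripe_idx N mc nprev k. \<Gamma> c' \<noteq> 0} - (if \<Gamma> c \<noteq> 0 then 1 else 0)" .
      moreover have "card {c'\<in>stripe_idx N mc nprev k. \<Gamma> c' \<noteq> 0} \<le> s" using stripe_cnt k by simp
      moreover have "\<Gamma> c \<noteq> 0 \<Longrightarrow> card {c'\<in>stripe_idx N mc nprev k. \<Gamma> c' \<noteq> 0} \<ge> 1"
      proof -
        assume "\<Gamma> c \<noteq> 0"
        hence "c \<in> {c'\<in>stripe_idx N mc nprev k. \<Gamma> c' \<noteq> 0}" using c_stripe by simp
        moreover have "finite {c'\<in>stripe_idx N mc nprev k. \<Gamma> c' \<noteq> 0}" using fin_st by simp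
        ultimately have "card {c'\<in>stripe_idx N mc nprev k. \<Gamma> c' \<noteq> 0} > 0" using card_gt_0_iff by blast
        thus ?thesis by simp
      qed
      ultimately show ?thesis by (cases "\<Gamma> c \<noteq> 0") auto
    qed
    have R1: "\<bar>\<Sum>c'\<in>A. ip c c' * \<Gamma> c'\<bar> \<le> \<mu> * gM * (real s - (if \<Gamma> c \<noteq> 0 then 1 else 0))"
    proof -
      have "\<bar>\<Sum>c'\<in>A. ip c c' * \<Gamma> c'\<bar> \<le> (\<Sum>c'\<in>A. \<bar>ip c c'\<bar> * \<bar>\<Gamma> c'\<bar>)"
        by (simp add: sum_abs[THEN order_trans] abs_mult)
      also have "\<dots> = (\<Sum>c'\<in>S. \<bar>ip c c'\<bar> * \<bar>\<Gamma> c'\<bar>)"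
        using SA finA unfolding S_def by (intro sum.mono_neutral_right) auto
      also have "\<dots> \<le> (\<Sum>c'\<in>S. \<mu> * gM)"
      proof (rule sum_mono)
        fix c' assume "c' \<in> S"
        hence c': "c' < N*mc" "c' \<noteq> c" "\<Gamma> c' \<noteq> 0" unfolding S_def A_def by auto
        show "\<bar>ip c c'\<bar> * \<bar>\<Gamma> c'\<bar> \<le> \<mu> * gM"
          using coh[OF c c'(1)] c' gmax_ge[OF c'(1,3)] \<mu>0 by (intro mult_mono) auto
      qed
      also have "\<dots> = \<mu> * gM * real (card S)" by simp
      also have "\<dots> \<le> \<mu> * gM * (real s - (if \<Gamma> c \<noteq> 0 then 1 else 0))"
        using cardS \<mu>0 gM0 by (intro mult_left_mono) auto
      finally show ?thesis .
    qed
    show ?thesis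
      using zsplit sig sig2 R1 R2
      by (intro exI[of _ "(\<Sum>c'\<in>A. ip c c' * \<Gamma> c') + (\<Sum>a<N*M. D a c * E a)"]) auto
  qed
  have on: "h c = z c \<and> \<bar>\<Gamma> c - h c\<bar> \<le> B \<and> \<bar>z c\<bar> > \<beta>" if c: "c < N*mc" "\<Gamma> c \<noteq> 0" for c
  proof -
    obtain R where R: "z c = \<Gamma> c + R" "\<bar>R\<bar> \<le> \<mu> * gM * (real s - 1) + \<epsilon>" using key[OF c(1)] c(2) by auto
    have "gm \<le> \<bar>\<Gamma> c\<bar>" using gmin_le[OF c] .
    moreover have "gm - \<mu> * gM * (real s - 1) - \<epsilon> > \<beta>"
      using cb1 unfolding gm_def \<mu>_def gM_def s_def by (simp add: algebra_simps)
    ultimately have "\<bar>z c\<bar> > \<beta>" using R by linarith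
    hence "h c = z c" unfolding h_def hard_thr_def by simp
    moreover have "\<bar>\<Gamma> c - h c\<bar> \<le> B" using R \<open>h c = z c\<close> unfolding B_def by (simp add: algebra_simps)
    ultimately show ?thesis using \<open>\<bar>z c\<bar> > \<beta>\<close> by simp
  qed
  have off: "h c = 0" if c: "c < N*mc" "\<Gamma> c = 0" for c
  proof -
    obtain R where R: "z c = \<Gamma> c + R" "\<bar>R\<bar> \<le> \<mu> * gM * real s + \<epsilon>" using key[OF c(1)] c(2) by auto
    moreover have "\<beta> > \<mu> * gM * real s + \<epsilon>"
      using cb2 unfolding \<mu>_def gM_def s_def by (simp add: algebra_simps)
    ultimately have "\<not> \<bar>z c\<bar> > \<beta>" using c by simp
    thus ?thesis unfolding h_def hard_thr_def by simp
  qed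
  have suppeq: "supp (N*mc) h = supp (N*mc) \<Gamma>"
  proof -
    have "h c \<noteq> 0 \<longleftrightarrow> \<Gamma> c \<noteq> 0" if "c < N*mc" for c
    proof (cases "\<Gamma> c = 0")
      case True thus ?thesis using off[OF that] by simp
    next
      case False
      have "\<bar>z c\<bar> > \<beta>" using on[OF that False] by blast
      moreover have "\<beta> > 0"
      proof -
        have "\<mu> * gM * real s \<ge> 0" using \<mu>0 gM0 by simp
        moreover have "\<epsilon> \<ge> 0"
        proof -
          have "(0::real) \<le> sqrt (\<Sum>a\<in>patch_idx N M nprev 0. (E a)\<^sup>2)" by (simp add: sum_nonneg)
          also have "\<dots> \<le> patch_norm2 N M nprev E" unfolding patch_norm2_def using N by (intro Max_ge) auto
          finally show ?thesis using err unfolding E_def by simp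
        qed
        ultimately show ?thesis using cb2 unfolding \<mu>_def gM_def s_def by (simp add: algebra_simps)
      qed
      ultimately show ?thesis using on[OF that False] False by auto
    qed
    thus ?thesis unfolding supp_def by auto
  qed
  have B0: "B \<ge> 0" using on[OF c0] by (meson abs_ge_zero order_trans)
  have dsq: "(\<Gamma> c - h c)\<^sup>2 \<le> (if \<Gamma> c \<noteq> 0 then B\<^sup>2 else 0)" if "c < N*mc" for c
  proof (cases "\<Gamma> c = 0")
    case True thus ?thesis using off[OF that] by simp
  next
    case False
    have "\<bar>\<Gamma> c - h c\<bar> \<le> B" using on[OF that False] by blast
    hence "\<bar>\<Gamma> c - h c\<bar>\<^sup>2 \<le> B\<^sup>2" by (intro power_mono) auto
    thus ?thesis using False by simp
  qed
  have pn: "patch_norm2 N mc nn (\<lambda>c. \<Gamma> c - h c) \<le> sqrt (real (patch_norm0 N mc nn \<Gamma>)) * B"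
    unfolding patch_norm2_def
  proof (rule Max.boundedI)
    show "finite ((\<lambda>j. sqrt (\<Sum>c\<in>patch_idx N mc nn j. (\<Gamma> c - h c)\<^sup>2)) ` {..<N})" by simp
    show "(\<lambda>j. sqrt (\<Sum>c\<in>patch_idx N mc nn j. (\<Gamma> c - h c)\<^sup>2)) ` {..<N} \<noteq> {}" using N by auto
    fix x assume "x \<in> (\<lambda>j. sqrt (\<Sum>c\<in>patch_idx N mc nn j. (\<Gamma> c - h c)\<^sup>2)) ` {..<N}"
    then obtain j where j: "j < N" and x: "x = sqrt (\<Sum>c\<in>patch_idx N mc nn j. (\<Gamma> c - h c)\<^sup>2)" by auto
    define P where "P = patch_idx N mc nn j"
    have PT: "P \<subseteq> {..<N*mc}" unfolding P_def by (rule patch_idx_sub[OF N])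
    have finP: "finite P" by (rule finite_subset[OF PT]) simp
    have "(\<Sum>c\<in>P. (\<Gamma> c - h c)\<^sup>2) \<le> (\<Sum>c\<in>P. if \<Gamma> c \<noteq> 0 then B\<^sup>2 else 0)"
    proof (rule sum_mono)
      fix c assume "c \<in> P"
      hence "c < N*mc" using PT by blast
      thus "(\<Gamma> c - h c)\<^sup>2 \<le> (if \<Gamma> c \<noteq> 0 then B\<^sup>2 else 0)" by (rule dsq)
    qed
    also have "\<dots> = real (card {c\<in>P. \<Gamma> c \<noteq> 0}) * B\<^sup>2"
      using finP by (simp add: sum.inter_filter[symmetric])
    also have "\<dots> \<le> real (patch_norm0 N mc nn \<Gamma>) * B\<^sup>2"
    proof (rule mult_right_mono)
      have "card {c\<in>P. \<Gamma> c \<noteq> 0} \<le> patch_norm0 N mc nn \<Gamma>"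
        unfolding patch_norm0_def P_def using j by (intro Max_ge) auto
      thus "real (card {c\<in>P. \<Gamma> c \<noteq> 0}) \<le> real (patch_norm0 N mc nn \<Gamma>)" by simp
    qed simp
    finally have "x \<le> sqrt (real (patch_norm0 N mc nn \<Gamma>) * B\<^sup>2)" unfolding x P_def
      by (rule real_sqrt_le_mono[of _ "real (patch_norm0 N mc nn \<Gamma>) * B\<^sup>2", unfolded P_def])
    also have "\<dots> = sqrt (real (patch_norm0 N mc nn \<Gamma>)) * B" using B0 by (simp add: real_sqrt_mult)
    finally show "x \<le> sqrt (real (patch_norm0 N mc nn \<Gamma>)) * B" .
  qed
  show ?thesis using suppeq pn unfolding h_def z_def B_def \<mu>_def s_def gM_def by simp
qed

theorem theorem3:
  fixes N K :: nat and m n :: "nat \<Rightarrow> nat"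
    and F :: "nat \<Rightarrow> nat \<Rightarrow> nat \<Rightarrow> real"
    and \<Gamma> :: "nat \<Rightarrow> nat \<Rightarrow> real"
    and Y E :: "nat \<Rightarrow> real" and \<epsilon>0 :: real and \<beta> :: "nat \<Rightarrow> real"
  assumes N_pos: "N \<ge> 1"
    and m0: "m 0 = 1"
    and n_range: "\<forall>i\<le>K. 1 \<le> n i \<and> n i \<le> N"
    and unit_cols: "\<forall>i\<in>{1..K}. \<forall>c<N * m i.
        (\<Sum>a<N * m (i - 1). (dict N m n F i a c)\<^sup>2) = 1"
    and model: "\<forall>i\<in>{1..K}. \<forall>a<N * m (i - 1).
        \<Gamma> (i - 1) a = mat_vec (N * m i) (dict N m n F i) (\<Gamma> i) a"
    and nonzero: "\<forall>i\<in>{1..K}. \<exists>c<N * m i. \<Gamma> i c \<noteq> 0"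
    and noisy: "\<forall>a<N. Y a = \<Gamma> 0 a + E a"
    and noise_bound: "patch_norm2 N (m 0) (n 0) E \<le> \<epsilon>0"
    and cond_a: "\<forall>i\<in>{1..K}.
        real (stripe_norm0 N (m i) (n (i - 1)) (\<Gamma> i))
        < 1/2 * (1 + 1 / mu_layer N m n F i * (gmin (N * m i) (\<Gamma> i) / gmax (N * m i) (\<Gamma> i)))
          - 1 / mu_layer N m n F i * (eps_seq N m n F \<Gamma> \<epsilon>0 (i - 1) / gmax (N * m i) (\<Gamma> i))"
    and cond_b: "\<forall>i\<in>{1..K}.
        gmin (N * m i) (\<Gamma> i)
          - (real (stripe_norm0 N (m i) (n (i - 1)) (\<Gamma> i)) - 1) * mu_layer N m n F i * gmax (N * m i) (\<Gamma> i)
          - eps_seq N m n F \<Gamma> \<epsilon>0 (i - 1) > \<beta> i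
        \<and> \<beta> i > real (stripe_norm0 N (m i) (n (i - 1)) (\<Gamma> i)) * mu_layer N m n F i * gmax (N * m i) (\<Gamma> i)
          + eps_seq N m n F \<Gamma> \<epsilon>0 (i - 1)"
  shows "\<forall>i\<in>{1..K}.
      supp (N * m i) (ghat N m n F \<beta> Y i) = supp (N * m i) (\<Gamma> i)
    \<and> patch_norm2 N (m i) (n i) (\<lambda>c. \<Gamma> i c - ghat N m n F \<beta> Y i c) \<le> eps_seq N m n F \<Gamma> \<epsilon>0 i"
proof -
  have N: "N > 0" using N_pos by simp
  have patch_cong: "patch_norm2 N M nn f = patch_norm2 N M nn g"
    if "\<And>c. c < N*M \<Longrightarrow> (f c)\<^sup>2 = (g c)\<^sup>2" for M nn and f g :: "nat \<Rightarrow> real"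
  proof -
    have "(\<Sum>c\<in>patch_idx N M nn j. (f c)\<^sup>2) = (\<Sum>c\<in>patch_idx N M nn j. (g c)\<^sup>2)" for j
    proof (rule sum.cong)
      fix x assume "x \<in> patch_idx N M nn j"
      hence "x < N*M" using patch_idx_sub[OF N, of M nn j] by blast
      thus "(f x)\<^sup>2 = (g x)\<^sup>2" using that by simp
    qed simp
    thus ?thesis unfolding patch_norm2_def by simp
  qed
  have step: "supp (N * m (Suc j)) (ghat N m n F \<beta> Y (Suc j)) = supp (N * m (Suc j)) (\<Gamma> (Suc j))
    \<and> patch_norm2 N (m (Suc j)) (n (Suc j)) (\<lambda>c. \<Gamma> (Suc j) c - ghat N m n F \<beta> Y (Suc j) c)
        \<le> eps_seq N m n F \<Gamma> \<epsilon>0 (Suc j)"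
    if j: "Suc j \<le> K" and IH: "patch_norm2 N (m j) (n j) (\<lambda>c. ghat N m n F \<beta> Y j c - \<Gamma> j c) \<le> eps_seq N m n F \<Gamma> \<epsilon>0 j"
    for j
  proof -
    have i: "Suc j \<in> {1..K}" using j by simp
    have "supp (N * m (Suc j)) (hard_thr (\<beta> (Suc j)) (tr_mat_vec (N * m j) (dict N m n F (Suc j)) (ghat N m n F \<beta> Y j))) = supp (N * m (Suc j)) (\<Gamma> (Suc j))
     \<and> patch_norm2 N (m (Suc j)) (n (Suc j)) (\<lambda>c. \<Gamma> (Suc j) c - hard_thr (\<beta> (Suc j)) (tr_mat_vec (N * m j) (dict N m n F (Suc j)) (ghat N m n F \<beta> Y j)) c)
        \<le> sqrt (real (patch_norm0 N (m (Suc j)) (n (Suc j)) (\<Gamma> (Suc j)))) * (eps_seq N m n F \<Gamma> \<epsilon>0 j + coherence (N * m j) (N * m (Suc j)) (dict N m n F (Suc j)) * (real (stripe_norm0 N (m (Suc j)) (n j) (\<Gamma> (Suc j))) - 1) * gmax (N * m (Suc j)) (\<Gamma> (Suc j)))"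
    proof (rule layer[OF N])
      show "\<And>a c. a < N * m j \<Longrightarrow> c < N * m (Suc j) \<Longrightarrow> dict N m n F (Suc j) a c \<noteq> 0 \<Longrightarrow> a \<in> patch_idx N (m j) (n j) (c div m (Suc j))"
        unfolding dict_def using conv_loc[OF N] by simp
      show "\<forall>c<N * m (Suc j). (\<Sum>a<N * m j. (dict N m n F (Suc j) a c)\<^sup>2) = 1" using unit_cols[rule_format, OF i] by simp
      show "\<forall>a<N * m j. \<Gamma> j a = mat_vec (N * m (Suc j)) (dict N m n F (Suc j)) (\<Gamma> (Suc j)) a" using model[rule_format, OF i] by simp
      show "\<exists>c<N * m (Suc j). \<Gamma> (Suc j) c \<noteq> 0" using nonzero[rule_format, OF i] by simp
      show "patch_norm2 N (m j) (n j) (\<lambda>a. ghat N m n F \<beta> Y j a - \<Gamma> j a) \<le> eps_seq N m n F \<Gamma> \<epsilon>0 j" using IH .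
      show "gmin (N * m (Suc j)) (\<Gamma> (Suc j)) - (real (stripe_norm0 N (m (Suc j)) (n j) (\<Gamma> (Suc j))) - 1) * coherence (N * m j) (N * m (Suc j)) (dict N m n F (Suc j)) * gmax (N * m (Suc j)) (\<Gamma> (Suc j)) - eps_seq N m n F \<Gamma> \<epsilon>0 j > \<beta> (Suc j)"
        using cond_b[rule_format, OF i] unfolding mu_layer_def by simp
      show "\<beta> (Suc j) > real (stripe_norm0 N (m (Suc j)) (n j) (\<Gamma> (Suc j))) * coherence (N * m j) (N * m (Suc j)) (dict N m n F (Suc j)) * gmax (N * m (Suc j)) (\<Gamma> (Suc j)) + eps_seq N m n F \<Gamma> \<epsilon>0 j"
        using cond_b[rule_format, OF i] unfolding mu_layer_def by simp
    qed
    thus ?thesis by (simp add: mu_layer_def)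
  qed
  have inv: "patch_norm2 N (m i) (n i) (\<lambda>c. ghat N m n F \<beta> Y i c - \<Gamma> i c) \<le> eps_seq N m n F \<Gamma> \<epsilon>0 i"
    if "i \<le> K" for i
    using that
  proof (induction i)
    case 0
    have "patch_norm2 N (m 0) (n 0) (\<lambda>c. ghat N m n F \<beta> Y 0 c - \<Gamma> 0 c) = patch_norm2 N (m 0) (n 0) E"
      using noisy m0 by (intro patch_cong) simp
    thus ?case using noise_bound by simp
  next
    case (Suc j)
    have "patch_norm2 N (m (Suc j)) (n (Suc j)) (\<lambda>c. ghat N m n F \<beta> Y (Suc j) c - \<Gamma> (Suc j) c)
      = patch_norm2 N (m (Suc j)) (n (Suc j)) (\<lambda>c. \<Gamma> (Suc j) c - ghat N m n F \<beta> Y (Suc j) c)"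
      by (intro patch_cong) (simp add: power2_commute)
    thus ?case using step[OF Suc.prems Suc.IH] Suc.prems by simp
  qed
  show ?thesis
  proof
    fix i assume i: "i \<in> {1..K}"
    then obtain j where ij: "i = Suc j" by (cases i) auto
    show "supp (N * m i) (ghat N m n F \<beta> Y i) = supp (N * m i) (\<Gamma> i)
      \<and> patch_norm2 N (m i) (n i) (\<lambda>c. \<Gamma> i c - ghat N m n F \<beta> Y i c) \<le> eps_seq N m n F \<Gamma> \<epsilon>0 i"
      using step[of j] inv[of j] i ij by simp
  qed
qed

end
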